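(* The distributive $\lambda$-calculus is confluent: for all terms $t,s_1,s_2$, if $t\to_{\mathsf{dist}}^* s_1$ and $t\to_{\mathsf{dist}}^* s_2$, then there exists a term $u$ such that $s_1\to_{\mathsf{dist}}^* u$ and $s_2\to_{\mathsf{dist}}^* u$.
   Context: Terms of the distributive $\lambda$-calculus are given by the grammar $t,s,u ::= x \mid \lambda x.t \mid ts \mid \langle t,s\rangle \mid \pi_1 t \mid \pi_2 t$, considered up to $\alpha$-renaming; $t\{x:=s\}$ denotes capture-avoiding substitution. The top-level rules are: $(\lambda x.t)s \mapsto_\beta t\{x:=s\}$; $\pi_i\langle t_1,t_2\rangle \mapsto_{\pi_i} t_i$ for $i=1,2$; $\langle t,s\rangle u \mapsto_{@_\times} \langle tu, su\rangle$; $\pi_i(\lambda x.t)\mapsto_{\pi_\lambda} \lambda x.\pi_i t$ for $i=1,2$. The relation $\to_{\mathsf{dist}}$ is the closure of the union of these rules under all term constructors (i.e. a rule may be applied to any subterm); $\to_{\mathsf{dist}}^*$ is its reflexive-transitive closure. *)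

theory Defs
  imports Main
begin

text \<open>Terms of the distributive lambda-calculus, up to alpha-renaming,
represented with de Bruijn indices (Var n refers to the n-th enclosing binder).\<close>

datatype dterm =
    Var nat
  | Lam dterm
  | App dterm dterm
  | Pair dterm dterm
  | Proj1 dterm
  | Proj2 dterm

primrec lift :: "dterm \<Rightarrow> nat \<Rightarrow> dterm" where
  "lift (Var i) k = (if i < k then Var i else Var (Suc i))"
| "lift (Lam t) k = Lam (lift t (Suc k))"
| "lift (App t s) k = App (lift t k) (lift s k)"
| "lift (Pair t s) k = Pair (lift t k) (lift s k)"
| "lift (Proj1 t) k = Proj1 (lift t k)"
| "lift (Proj2 t) k = Proj2 (lift t k)"

text \<open>subst t s k: capture-avoiding substitution of s for index k in t,
decrementing the free indices above k (the binder is removed).\<close>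
primrec subst :: "dterm \<Rightarrow> dterm \<Rightarrow> nat \<Rightarrow> dterm" where
  "subst (Var i) s k = (if k < i then Var (i - 1) else if i = k then s else Var i)"
| "subst (Lam t) s k = Lam (subst t (lift s 0) (Suc k))"
| "subst (App t u) s k = App (subst t s k) (subst u s k)"
| "subst (Pair t u) s k = Pair (subst t s k) (subst u s k)"
| "subst (Proj1 t) s k = Proj1 (subst t s k)"
| "subst (Proj2 t) s k = Proj2 (subst t s k)"

inductive dist_step :: "dterm \<Rightarrow> dterm \<Rightarrow> bool" where
  beta:   "dist_step (App (Lam t) s) (subst t s 0)"
| pi1:    "dist_step (Proj1 (Pair t1 t2)) t1"
| pi2:    "dist_step (Proj2 (Pair t1 t2)) t2"
| app_pair: "dist_step (App (Pair t s) u) (Pair (App t u) (App s u))"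
| pi1_lam: "dist_step (Proj1 (Lam t)) (Lam (Proj1 t))"
| pi2_lam: "dist_step (Proj2 (Lam t)) (Lam (Proj2 t))"
| cong_lam:   "dist_step t t' \<Longrightarrow> dist_step (Lam t) (Lam t')"
| cong_app1:  "dist_step t t' \<Longrightarrow> dist_step (App t s) (App t' s)"
| cong_app2:  "dist_step s s' \<Longrightarrow> dist_step (App t s) (App t s')"
| cong_pair1: "dist_step t t' \<Longrightarrow> dist_step (Pair t s) (Pair t' s)"
| cong_pair2: "dist_step s s' \<Longrightarrow> dist_step (Pair t s) (Pair t s')"
| cong_proj1: "dist_step t t' \<Longrightarrow> dist_step (Proj1 t) (Proj1 t')"
| cong_proj2: "dist_step t t' \<Longrightarrow> dist_step (Proj2 t) (Proj2 t')"

abbreviation dist_steps :: "dterm \<Rightarrow> dterm \<Rightarrow> bool" where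
  "dist_steps \<equiv> dist_step\<^sup>*\<^sup>*"

end

theory Submission
  imports Defs
begin

lemma lift_lift:
    "i < k + 1 \<Longrightarrow> lift (lift t i) (Suc k) = lift (lift t k) i"
  by (induct t arbitrary: i k) auto

lemma lift_subst [simp]:
    "j < i + 1 \<Longrightarrow> lift (subst t s j) i = subst (lift t (i + 1)) (lift s i) j"
  by (induct t arbitrary: i j s)
    (simp_all add: diff_Suc lift_lift split: nat.split)

lemma lift_subst_lt:
    "i < j + 1 \<Longrightarrow> lift (subst t s j) i = subst (lift t i) (lift s i) (j + 1)"
  by (induct t arbitrary: i j s) (auto simp: lift_lift)

lemma subst_lift [simp]:
    "subst (lift t k) s k = t"
  by (induct t arbitrary: k s) simp_all

lemma subst_subst:
    "i < j + 1 \<Longrightarrow> subst (subst t (lift v i) (Suc j)) (subst u v j) i = subst (subst t u i) v j"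
  by (induct t arbitrary: i j u v)
    (simp_all add: diff_Suc lift_lift [symmetric] lift_subst_lt
      split: nat.split)

inductive par :: "dterm \<Rightarrow> dterm \<Rightarrow> bool" where
  pvar: "par (Var i) (Var i)"
| plam: "par t t' \<Longrightarrow> par (Lam t) (Lam t')"
| papp: "par t t' \<Longrightarrow> par s s' \<Longrightarrow> par (App t s) (App t' s')"
| ppair: "par t t' \<Longrightarrow> par s s' \<Longrightarrow> par (Pair t s) (Pair t' s')"
| pproj1: "par t t' \<Longrightarrow> par (Proj1 t) (Proj1 t')"
| pproj2: "par t t' \<Longrightarrow> par (Proj2 t) (Proj2 t')"
| pbeta: "par t t' \<Longrightarrow> par s s' \<Longrightarrow> par (App (Lam t) s) (subst t' s' 0)"
| ppi1: "par a a' \<Longrightarrow> par (Proj1 (Pair a b)) a'"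
| ppi2: "par b b' \<Longrightarrow> par (Proj2 (Pair a b)) b'"
| pappair: "par t t' \<Longrightarrow> par s s' \<Longrightarrow> par u u' \<Longrightarrow>
     par (App (Pair t s) u) (Pair (App t' u') (App s' u'))"
| ppi1lam: "par t t' \<Longrightarrow> par (Proj1 (Lam t)) (Lam (Proj1 t'))"
| ppi2lam: "par t t' \<Longrightarrow> par (Proj2 (Lam t)) (Lam (Proj2 t'))"

inductive_cases par_LamE: "par (Lam t) u"
inductive_cases par_PairE: "par (Pair t s) u"

lemma par_refl [simp, intro]: "par t t"
  by (induct t) (auto intro: par.intros)

lemma par_lift: "par t t' \<Longrightarrow> par (lift t k) (lift t' k)"
proof (induct arbitrary: k rule: par.induct)
  case (pbeta t t' s s')
  then show ?case using par.pbeta[of "lift t (Suc k)" "lift t' (Suc k)" "lift s k" "lift s' k"]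
    by simp
qed (auto intro: par.intros)

lemma par_subst: "par t t' \<Longrightarrow> par s s' \<Longrightarrow> par (subst t s k) (subst t' s' k)"
proof (induct arbitrary: s s' k rule: par.induct)
  case (plam t t')
  then show ?case by (auto intro!: par.plam par_lift)
next
  case (pbeta t t' u u')
  have "par (App (Lam (subst t (lift s 0) (Suc k))) (subst u s k))
      (subst (subst t' (lift s' 0) (Suc k)) (subst u' s' k) 0)"
    using pbeta by (auto intro!: par.pbeta par_lift)
  then show ?case using subst_subst[of 0 k t' s' "u'"] by simp
next
  case (ppi1lam t t')
  then show ?case by (auto intro!: par.ppi1lam par_lift)
next
  case (ppi2lam t t')
  then show ?case by (auto intro!: par.ppi2lam par_lift)
qed (auto intro: par.intros)

fun cd :: "dterm \<Rightarrow> dterm" where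
  "cd (Var i) = Var i"
| "cd (Lam t) = Lam (cd t)"
| "cd (App (Lam t) s) = subst (cd t) (cd s) 0"
| "cd (App (Pair t s) u) = Pair (App (cd t) (cd u)) (App (cd s) (cd u))"
| "cd (App t s) = App (cd t) (cd s)"
| "cd (Pair t s) = Pair (cd t) (cd s)"
| "cd (Proj1 (Pair a b)) = cd a"
| "cd (Proj1 (Lam t)) = Lam (Proj1 (cd t))"
| "cd (Proj1 t) = Proj1 (cd t)"
| "cd (Proj2 (Pair a b)) = cd b"
| "cd (Proj2 (Lam t)) = Lam (Proj2 (cd t))"
| "cd (Proj2 t) = Proj2 (cd t)"

lemma par_cd: "par t s \<Longrightarrow> par s (cd t)"
proof (induct rule: par.induct)
  case (papp t t' s s')
  show ?case
  proof (cases t)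
    case (Lam x)
    with papp show ?thesis by (auto elim!: par_LamE intro: par.intros)
  next
    case (Pair a b)
    with papp show ?thesis by (auto elim!: par_PairE intro: par.intros)
  qed (use papp in \<open>auto intro: par.intros\<close>)
next
  case (pproj1 t t')
  show ?case
  proof (cases t)
    case (Lam x)
    with pproj1 show ?thesis by (auto elim!: par_LamE intro: par.intros)
  next
    case (Pair a b)
    with pproj1 show ?thesis by (auto elim!: par_PairE intro: par.intros)
  qed (use pproj1 in \<open>auto intro: par.intros\<close>)
next
  case (pproj2 t t')
  show ?case
  proof (cases t)
    case (Lam x)
    with pproj2 show ?thesis by (auto elim!: par_LamE intro: par.intros)
  next
    case (Pair a b)
    with pproj2 show ?thesis by (auto elim!: par_PairE intro: par.intros)
  qed (use pproj2 in \<open>auto intro: par.intros\<close>)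
next
  case (pbeta t t' s s')
  then show ?case by (simp add: par_subst)
qed (auto intro: par.intros)

lemma step_par: "dist_step t s \<Longrightarrow> par t s"
  by (induct rule: dist_step.induct) (auto intro: par.intros)

lemma steps_Lam: "dist_steps s s' \<Longrightarrow> dist_steps (Lam s) (Lam s')"
  by (induct rule: rtranclp_induct) (auto intro: rtranclp.rtrancl_into_rtrancl dist_step.intros)
lemma steps_Proj1: "dist_steps s s' \<Longrightarrow> dist_steps (Proj1 s) (Proj1 s')"
  by (induct rule: rtranclp_induct) (auto intro: rtranclp.rtrancl_into_rtrancl dist_step.intros)
lemma steps_Proj2: "dist_steps s s' \<Longrightarrow> dist_steps (Proj2 s) (Proj2 s')"
  by (induct rule: rtranclp_induct) (auto intro: rtranclp.rtrancl_into_rtrancl dist_step.intros)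
lemma steps_App1: "dist_steps s s' \<Longrightarrow> dist_steps (App s t) (App s' t)"
  by (induct rule: rtranclp_induct) (auto intro: rtranclp.rtrancl_into_rtrancl dist_step.intros)
lemma steps_App2: "dist_steps s s' \<Longrightarrow> dist_steps (App t s) (App t s')"
  by (induct rule: rtranclp_induct) (auto intro: rtranclp.rtrancl_into_rtrancl dist_step.intros)
lemma steps_Pair1: "dist_steps s s' \<Longrightarrow> dist_steps (Pair s t) (Pair s' t)"
  by (induct rule: rtranclp_induct) (auto intro: rtranclp.rtrancl_into_rtrancl dist_step.intros)
lemma steps_Pair2: "dist_steps s s' \<Longrightarrow> dist_steps (Pair t s) (Pair t s')"
  by (induct rule: rtranclp_induct) (auto intro: rtranclp.rtrancl_into_rtrancl dist_step.intros)

lemma steps_App: "dist_steps s s' \<Longrightarrow> dist_steps t t' \<Longrightarrow> dist_steps (App s t) (App s' t')"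
  by (meson rtranclp_trans steps_App1 steps_App2)
lemma steps_Pair: "dist_steps s s' \<Longrightarrow> dist_steps t t' \<Longrightarrow> dist_steps (Pair s t) (Pair s' t')"
  by (meson rtranclp_trans steps_Pair1 steps_Pair2)

lemma par_steps: "par t s \<Longrightarrow> dist_steps t s"
proof (induct rule: par.induct)
  case (pbeta t t' s s')
  have "dist_steps (App (Lam t) s) (App (Lam t') s')"
    using pbeta by (simp add: steps_App steps_Lam)
  then show ?case by (meson dist_step.beta rtranclp.rtrancl_into_rtrancl)
next
  case (ppi1 a a' b)
  have "dist_step (Proj1 (Pair a b)) a" by (rule dist_step.pi1)
  then show ?case using ppi1 by (meson converse_rtranclp_into_rtranclp)
next
  case (ppi2 b b' a)
  have "dist_step (Proj2 (Pair a b)) b" by (rule dist_step.pi2)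
  then show ?case using ppi2 by (meson converse_rtranclp_into_rtranclp)
next
  case (pappair t t' s s' u u')
  have "dist_step (App (Pair t s) u) (Pair (App t u) (App s u))" by (rule dist_step.app_pair)
  moreover have "dist_steps (Pair (App t u) (App s u)) (Pair (App t' u') (App s' u'))"
    using pappair by (simp add: steps_App steps_Pair)
  ultimately show ?case by (meson converse_rtranclp_into_rtranclp)
next
  case (ppi1lam t t')
  have "dist_step (Proj1 (Lam t)) (Lam (Proj1 t))" by (rule dist_step.pi1_lam)
  moreover have "dist_steps (Lam (Proj1 t)) (Lam (Proj1 t'))"
    using ppi1lam by (simp add: steps_Lam steps_Proj1)
  ultimately show ?case by (meson converse_rtranclp_into_rtranclp)
next
  case (ppi2lam t t')
  have "dist_step (Proj2 (Lam t)) (Lam (Proj2 t))" by (rule dist_step.pi2_lam)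
  moreover have "dist_steps (Lam (Proj2 t)) (Lam (Proj2 t'))"
    using ppi2lam by (simp add: steps_Lam steps_Proj2)
  ultimately show ?case by (meson converse_rtranclp_into_rtranclp)
qed (auto simp: steps_Lam steps_App steps_Pair steps_Proj1 steps_Proj2)

lemma strip: "par\<^sup>*\<^sup>* t s2 \<Longrightarrow> par t s1 \<Longrightarrow> \<exists>u. par\<^sup>*\<^sup>* s1 u \<and> par s2 u"
proof (induct arbitrary: s1 rule: rtranclp_induct)
  case base
  then show ?case by blast
next
  case (step y z)
  then obtain u where u: "par\<^sup>*\<^sup>* s1 u" "par y u" by blast
  have "par z (cd y)" "par u (cd y)" using step(2) u(2) by (auto intro: par_cd)
  then show ?case using u(1) by (meson rtranclp.rtrancl_into_rtrancl)
qed

lemma par_confl: "par\<^sup>*\<^sup>* t s1 \<Longrightarrow> par\<^sup>*\<^sup>* t s2 \<Longrightarrow> \<exists>u. par\<^sup>*\<^sup>* s1 u \<and> par\<^sup>*\<^sup>* s2 u"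
proof (induct arbitrary: s2 rule: rtranclp_induct)
  case base
  then show ?case by blast
next
  case (step y z)
  then obtain u where u: "par\<^sup>*\<^sup>* y u" "par\<^sup>*\<^sup>* s2 u" by blast
  from strip[OF u(1) step(2)] obtain w where "par\<^sup>*\<^sup>* z w" "par u w" by blast
  then show ?case using u(2) by (meson rtranclp.rtrancl_into_rtrancl)
qed

lemma steps_eq: "dist_steps t s = par\<^sup>*\<^sup>* t s"
proof
  assume "dist_steps t s" then show "par\<^sup>*\<^sup>* t s"
    by (induct rule: rtranclp_induct) (auto intro: rtranclp.rtrancl_into_rtrancl step_par)
next
  assume "par\<^sup>*\<^sup>* t s" then show "dist_steps t s"
    by (induct rule: rtranclp_induct) (auto intro: rtranclp_trans par_steps)
qed

theorem theorem1:
  assumes "dist_steps t s1" and "dist_steps t s2"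
  shows "\<exists>u. dist_steps s1 u \<and> dist_steps s2 u"
  using par_confl assms unfolding steps_eq by blast

end
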